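(* Let $k$ be a positive integer, let $D$ be a digraph containing no subdivision of $B(k,1;k)$, let $\mathcal{C}$ be a $k$-suitable collection of directed cycles of $D$, and let $C_1\in\mathcal{C}$. Then (i) $I^+(C_1)$ and $I^-(C_1)$ are vertex-disjoint; and (ii) for every $C_j\in\mathcal{C}\cap C_1$, $V(I^-(C_1))\cap V(C_j)=V(Q^-_j)$ and $V(I^+(C_1))\cap V(C_j)=V(Q^+_j)$.
   Context: A collection $\mathcal{C}$ of directed cycles is $k$-suitable if every cycle of $\mathcal{C}$ has length at least $8k$ and for any two distinct $C_i,C_j\in\mathcal{C}$, the set $V(C_i)\cap V(C_j)$ is either empty or the vertex set of a directed path $P_{i,j}$ with at most $k$ vertices which is a subpath of both $C_i$ and $C_j$; $s_{i,j}$, $t_{i,j}$ denote the initial and terminal vertices of $P_{i,j}$. For a directed cycle $C$ and vertices $a,b$ on it, $C[a,b]$ is the directed subpath of $C$ from $a$ to $b$, and $C[a,b[$, $C]a,b]$ denote it with $b$, respectively $a$, removed. $\mathcal{C}\cap C_1$ denotes the set of cycles of $\mathcal{C}$ other than $C_1$ that share a vertex with $C_1$. For $C_j\in\mathcal{C}\cap C_1$, $Q_j$ is the subpath of $C_j$ consisting of all vertices at distance at most $3k$ from $P_{1,j}$ along the cycle, so that $C_j[s(Q_j),s_{1,j}]$ and $C_j[t_{1,j},t(Q_j)]$ both have length $3k$ ($s(Q_j),t(Q_j)$ being its initial and terminal vertices); $Q^-_j=C_j[s(Q_j),s_{1,j}[$ and $Q^+_j=C_j]t_{1,j},t(Q_j)]$.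 Finally $I^+(C_1)=\bigcup_{C_j\in\mathcal{C}\cap C_1}Q^+_j$, $I^-(C_1)=\bigcup_{C_j\in\mathcal{C}\cap C_1}Q^-_j$ and $I(C_1)=C_1\cup\bigcup_{C_j\in\mathcal{C}\cap C_1}Q_j$ (unions of digraphs). A digraph contains a subdivision of $B(k_1,k_2;k_3)$ if there exist distinct vertices $u,w$ and three pairwise internally vertex-disjoint directed paths: two from $u$ to $w$ of lengths at least $k_1$ and $k_2$, and one from $w$ to $u$ of length at least $k_3$. *)

theory Defs
  imports Main
begin

text \<open>A path p has length (number of arcs) length p - 1; a cycle c has length (number of arcs)
  length c, its arcs being (c!i, c!((i+1) mod length c)).\<close>

definition digraph :: "'a set \<Rightarrow> ('a \<times> 'a) set \<Rightarrow> bool" where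
  "digraph V A \<longleftrightarrow> finite V \<and> A \<subseteq> V \<times> V \<and> (\<forall>v. (v, v) \<notin> A)"

definition dpath :: "'a set \<Rightarrow> ('a \<times> 'a) set \<Rightarrow> 'a list \<Rightarrow> bool" where
  "dpath V A p \<longleftrightarrow> p \<noteq> [] \<and> distinct p \<and> set p \<subseteq> V \<and>
     (\<forall>i. Suc i < length p \<longrightarrow> (p ! i, p ! Suc i) \<in> A)"

definition dcycle :: "'a set \<Rightarrow> ('a \<times> 'a) set \<Rightarrow> 'a list \<Rightarrow> bool" where
  "dcycle V A c \<longleftrightarrow> c \<noteq> [] \<and> distinct c \<and> set c \<subseteq> V \<and>
     (\<forall>i < length c. (c ! i, c ! ((Suc i) mod length c)) \<in> A)"

definition interior :: "'a list \<Rightarrow> 'a set" where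
  "interior p = set (butlast (tl p))"

text \<open>D contains a subdivision of B(k1,k2;k3).  The two u-w paths are required to be
  distinct (they correspond to two distinct arcs of B).\<close>
definition has_B_subdivision :: "'a set \<Rightarrow> ('a \<times> 'a) set \<Rightarrow> nat \<Rightarrow> nat \<Rightarrow> nat \<Rightarrow> bool" where
  "has_B_subdivision V A k1 k2 k3 \<longleftrightarrow>
     (\<exists>u w P1 P2 P3. u \<noteq> w \<and>
        dpath V A P1 \<and> hd P1 = u \<and> last P1 = w \<and> length P1 - 1 \<ge> k1 \<and>
        dpath V A P2 \<and> hd P2 = u \<and> last P2 = w \<and> length P2 - 1 \<ge> k2 \<and>
        dpath V A P3 \<and> hd P3 = w \<and> last P3 = u \<and> length P3 - 1 \<ge> k3 \<and>
        P1 \<noteq> P2 \<and>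
        interior P1 \<inter> interior P2 = {} \<and> interior P1 \<inter> interior P3 = {} \<and>
        interior P2 \<inter> interior P3 = {})"

definition cyc_seg :: "'a list \<Rightarrow> nat \<Rightarrow> nat \<Rightarrow> 'a list" where
  "cyc_seg c a m = map (\<lambda>i. c ! ((a + i) mod length c)) [0..<m]"

definition cyc_subpath :: "'a list \<Rightarrow> 'a list \<Rightarrow> bool" where
  "cyc_subpath c P \<longleftrightarrow> P \<noteq> [] \<and> length P \<le> length c \<and> (\<exists>a. P = cyc_seg c a (length P))"

definition k_suitable :: "'a set \<Rightarrow> ('a \<times> 'a) set \<Rightarrow> nat \<Rightarrow> 'a list set \<Rightarrow> bool" where
  "k_suitable V A k \<C> \<longleftrightarrow>
     (\<forall>C \<in> \<C>. dcycle V A C \<and> length C \<ge> 8 * k) \<and>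
     (\<forall>Ci \<in> \<C>. \<forall>Cj \<in> \<C>. Ci \<noteq> Cj \<longrightarrow>
        set Ci \<inter> set Cj = {} \<or>
        (\<exists>P. cyc_subpath Ci P \<and> cyc_subpath Cj P \<and> length P \<le> k \<and>
             set P = set Ci \<inter> set Cj))"

definition common_path :: "'a list \<Rightarrow> 'a list \<Rightarrow> 'a list" where
  "common_path Ci Cj = (THE P. cyc_subpath Ci P \<and> cyc_subpath Cj P \<and> set P = set Ci \<inter> set Cj)"

definition pos :: "'a list \<Rightarrow> 'a \<Rightarrow> nat" where
  "pos c v = (THE i. i < length c \<and> c ! i = v)"

text \<open>Q^-_j = C_j[s(Q_j), s_{1,j}[ : the 3k vertices of C_j preceding s_{1,j};
  Q^+_j = C_j]t_{1,j}, t(Q_j)] : the 3k vertices of C_j following t_{1,j}.\<close>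
definition Qminus :: "nat \<Rightarrow> 'a list \<Rightarrow> 'a list \<Rightarrow> 'a list" where
  "Qminus k C1 Cj = cyc_seg Cj (pos Cj (hd (common_path C1 Cj)) + length Cj - 3 * k) (3 * k)"

definition Qplus :: "nat \<Rightarrow> 'a list \<Rightarrow> 'a list \<Rightarrow> 'a list" where
  "Qplus k C1 Cj = cyc_seg Cj (Suc (pos Cj (last (common_path C1 Cj)))) (3 * k)"

definition meets :: "'a list set \<Rightarrow> 'a list \<Rightarrow> 'a list set" where
  "meets \<C> C1 = {Cj \<in> \<C>. Cj \<noteq> C1 \<and> set Cj \<inter> set C1 \<noteq> {}}"

definition Iplus_verts :: "nat \<Rightarrow> 'a list set \<Rightarrow> 'a list \<Rightarrow> 'a set" where
  "Iplus_verts k \<C> C1 = (\<Union>Cj \<in> meets \<C> C1. set (Qplus k C1 Cj))"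

definition Iminus_verts :: "nat \<Rightarrow> 'a list set \<Rightarrow> 'a list \<Rightarrow> 'a set" where
  "Iminus_verts k \<C> C1 = (\<Union>Cj \<in> meets \<C> C1. set (Qminus k C1 Cj))"

end

theory Submission
  imports Defs
begin


lemma succ_nth: "(\<forall>i. Suc i < length p \<longrightarrow> P (p!i) (p!Suc i)) \<longleftrightarrow> successively P p"
proof (induction p)
  case Nil then show ?case by simp
next
  case (Cons x xs)
  show ?case
  proof (cases xs)
    case Nil then show ?thesis by simp
  next
    case (Cons y ys)
    have "(\<forall>i. Suc i < length (x#xs) \<longrightarrow> P ((x#xs)!i) ((x#xs)!Suc i)) \<longleftrightarrow>
          P x y \<and> (\<forall>i. Suc i < length xs \<longrightarrow> P (xs!i) (xs!Suc i))" (is "?L \<longleftrightarrow> ?R")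
    proof
      assume L: ?L
      have "P x y" using L[rule_format, of 0] Cons by simp
      moreover have "\<forall>i. Suc i < length xs \<longrightarrow> P (xs!i) (xs!Suc i)"
        using L by (metis Suc_less_eq length_Cons nth_Cons_Suc)
      ultimately show ?R by simp
    next
      assume R: ?R
      show ?L
      proof (intro allI impI)
        fix i assume "Suc i < length (x#xs)"
        then show "P ((x#xs)!i) ((x#xs)!Suc i)" using R Cons by (cases i) auto
      qed
    qed
    then show ?thesis using Cons.IH Cons by simp
  qed
qed

lemma dpath_succ: "dpath V A p \<longleftrightarrow> p \<noteq> [] \<and> distinct p \<and> set p \<subseteq> V \<and> successively (\<lambda>x y. (x,y) \<in> A) p"
  unfolding dpath_def using succ_nth[of p "\<lambda>x y. (x,y) \<in> A"] by auto

lemma dpath_concat: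
  assumes "dpath V A p" "dpath V A q" "last p = hd q" "set p \<inter> set q = {hd q}"
  shows "dpath V A (p @ tl q)" "hd (p @ tl q) = hd p" "last (p @ tl q) = last q"
    "set (p @ tl q) = set p \<union> set q" "length (p @ tl q) = length p + length q - 1"
proof -
  obtain x qs where q: "q = x # qs" using assms(2) unfolding dpath_def by (cases q) auto
  have pn: "p \<noteq> []" using assms(1) unfolding dpath_def by auto
  have lp: "last p = x" using assms(3) q by simp
  have "x \<in> set p" using pn lp last_in_set by fastforce
  then show "set (p @ tl q) = set p \<union> set q" using q by auto
  show "hd (p @ tl q) = hd p" using pn by simp
  show "last (p @ tl q) = last q" using q lp pn by (cases qs) auto
  show "length (p @ tl q) = length p + length q - 1" using q by simp
  have d1: "distinct p" "distinct q" using assms(1,2) unfolding dpath_def by auto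
  have "set p \<inter> set qs = {}"
  proof -
    have "x \<notin> set qs" using d1(2) q by simp
    then show ?thesis using assms(4) q by auto
  qed
  then have dd: "distinct (p @ qs)" using d1 q by simp
  have s1: "successively (\<lambda>x y. (x,y) \<in> A) p" "successively (\<lambda>x y. (x,y) \<in> A) (x # qs)"
    using assms(1,2) q unfolding dpath_succ by auto
  have s2: "successively (\<lambda>x y. (x,y) \<in> A) qs" using s1(2) by (cases qs) auto
  have s3: "qs = [] \<or> (x, hd qs) \<in> A" using s1(2) by (cases qs) auto
  have "successively (\<lambda>x y. (x,y) \<in> A) (p @ qs)"
    unfolding successively_append_iff using s1(1) s2 s3 lp by blast
  moreover have "set (p @ qs) \<subseteq> V" using assms(1,2) q unfolding dpath_def by auto
  ultimately show "dpath V A (p @ tl q)" using dd q pn unfolding dpath_succ by simp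
qed

lemma interior_eq: assumes "distinct p" "p \<noteq> []" shows "interior p = set p - {hd p, last p}"
proof (cases p)
  case Nil then show ?thesis using assms by simp
next
  case (Cons x xs)
  show ?thesis
  proof (cases xs rule: rev_cases)
    case Nil then show ?thesis using Cons by (simp add: interior_def)
  next
    case (snoc ys y)
    then show ?thesis using Cons assms by (auto simp: interior_def)
  qed
qed

definition cd :: "'a list \<Rightarrow> 'a \<Rightarrow> 'a \<Rightarrow> nat" where
  "cd c u v = (pos c v + length c - pos c u) mod length c"

lemma pos_nth: "distinct c \<Longrightarrow> i < length c \<Longrightarrow> pos c (c!i) = i"
  unfolding pos_def by (rule the_equality) (auto simp: nth_eq_iff_index_eq)

lemma pos_in: assumes "distinct c" "v \<in> set c" shows "pos c v < length c" "c ! pos c v = v"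
proof -
  obtain i where "i < length c" "c ! i = v" using assms(2) by (auto simp: in_set_conv_nth)
  then show "pos c v < length c" "c ! pos c v = v" using pos_nth[OF assms(1)] by auto
qed

lemma cd_alt: assumes "distinct c" "u \<in> set c" "v \<in> set c"
  shows "cd c u v = (if pos c u \<le> pos c v then pos c v - pos c u else pos c v + length c - pos c u)"
proof -
  have a: "pos c u < length c" "pos c v < length c" using pos_in[OF assms(1,2)] pos_in[OF assms(1,3)] by auto
  show ?thesis
  proof (cases "pos c u \<le> pos c v")
    case True
    then have e: "pos c v + length c - pos c u = (pos c v - pos c u) + length c" by simp
    have "((pos c v - pos c u) + length c) mod length c = pos c v - pos c u"
      using a by simp
    then show ?thesis unfolding cd_def e using True by simp
  next
    case False then show ?thesis unfolding cd_def using a by simp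
  qed
qed

lemma cd_pos: assumes "distinct c" "u \<in> set c" shows "pos c u < length c"
  using pos_in[OF assms] by simp

lemma cd_lt: assumes "distinct c" "u \<in> set c" "v \<in> set c" shows "cd c u v < length c"
  using cd_alt[OF assms] cd_pos[OF assms(1,2)] cd_pos[OF assms(1,3)] by (simp split: if_split; arith)

lemma cd_0_iff: assumes "distinct c" "u \<in> set c" "v \<in> set c" shows "cd c u v = 0 \<longleftrightarrow> u = v"
proof -
  have "cd c u v = 0 \<longleftrightarrow> pos c u = pos c v"
    using cd_alt[OF assms] cd_pos[OF assms(1,2)] cd_pos[OF assms(1,3)] by (simp split: if_split; arith)
  also have "\<dots> \<longleftrightarrow> u = v" using pos_in[OF assms(1,2)] pos_in[OF assms(1,3)] by metis
  finally show ?thesis .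
qed

lemma cd_self: "distinct c \<Longrightarrow> u \<in> set c \<Longrightarrow> cd c u u = 0"
  using cd_0_iff by metis

lemma cd_sum: assumes "distinct c" "u \<in> set c" "v \<in> set c" "u \<noteq> v" shows "cd c u v + cd c v u = length c"
proof -
  have "pos c u \<noteq> pos c v" using pos_in[OF assms(1,2)] pos_in[OF assms(1,3)] assms(4) by metis
  then show ?thesis
  using cd_alt[OF assms(1-3)] cd_alt[OF assms(1,3,2)] cd_pos[OF assms(1,2)] cd_pos[OF assms(1,3)] by (simp split: if_split; arith)
qed

lemma tri_ar: fixes pu pv pw n :: nat
  assumes "pu < n" "pv < n" "pw < n"
  shows "(if pu \<le> pw then pw - pu else pw + n - pu) = (if pu \<le> pv then pv - pu else pv + n - pu) + (if pv \<le> pw then pw - pv else pw + n - pv)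
   \<or> (if pu \<le> pw then pw - pu else pw + n - pu) + n = (if pu \<le> pv then pv - pu else pv + n - pu) + (if pv \<le> pw then pw - pv else pw + n - pv)"
  using assms by (simp split: if_split) arith

lemma cd_tri: assumes "distinct c" "u \<in> set c" "v \<in> set c" "w \<in> set c" shows
   "cd c u w = cd c u v + cd c v w \<or> cd c u w + length c = cd c u v + cd c v w"
  unfolding cd_alt[OF assms(1-3)] cd_alt[OF assms(1,3,4)] cd_alt[OF assms(1,2,4)]
  by (rule tri_ar) (use cd_pos[OF assms(1,2)] cd_pos[OF assms(1,3)] cd_pos[OF assms(1,4)] in auto)

lemma nth_mod_in: "c \<noteq> [] \<Longrightarrow> c ! (j mod length c) \<in> set c"
  by simp

lemma cd_nth: assumes "distinct c" "u \<in> set c" "i < length c"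
  shows "cd c u (c ! ((pos c u + i) mod length c)) = i"
proof -
  have n: "length c > 0" using assms by auto
  have p: "pos c (c ! ((pos c u + i) mod length c)) = (pos c u + i) mod length c"
    using pos_nth[OF assms(1), of "(pos c u + i) mod length c"] n by simp
  have pu: "pos c u < length c" using cd_pos[OF assms(1,2)] by auto
  show ?thesis
  proof (cases "pos c u + i < length c")
    case True then show ?thesis unfolding cd_def p using assms(3) by simp
  next
    case False
    then have "(pos c u + i) mod length c = pos c u + i - length c"
      using pu assms(3) by (simp add: mod_if)
    then show ?thesis unfolding cd_def p using False pu assms(3) by (simp add: mod_if)
  qed
qed

lemma cd_inv: assumes "distinct c" "u \<in> set c" "z \<in> set c"
  shows "c ! ((pos c u + cd c u z) mod length c) = z"
proof -
  have a: "pos c u < length c" "pos c z < length c" using pos_in[OF assms(1,2)] pos_in[OF assms(1,3)] by auto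
  have "(pos c u + cd c u z) mod length c = pos c z"
    using cd_alt[OF assms] a by (auto simp: mod_if)
  then show ?thesis using pos_in assms by simp
qed

lemma cyc_seg_len[simp]: "length (cyc_seg c a m) = m" unfolding cyc_seg_def by simp
lemma cyc_seg_nth: "i < m \<Longrightarrow> cyc_seg c a m ! i = c ! ((a + i) mod length c)"
  unfolding cyc_seg_def by simp

lemma seg_start: assumes "distinct c" "c \<noteq> []"
  shows "c ! (a mod length c) \<in> set c" "(a + i) mod length c = (pos c (c ! (a mod length c)) + i) mod length c"
proof -
  show "c ! (a mod length c) \<in> set c" using assms by simp
  have "pos c (c ! (a mod length c)) = a mod length c" using pos_nth[OF assms(1), of "a mod length c"] assms(2) by simp
  then show "(a + i) mod length c = (pos c (c ! (a mod length c)) + i) mod length c"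
    by (simp add: mod_add_left_eq)
qed

lemma seg_set: assumes "distinct c" "c \<noteq> []" "m \<le> length c"
  shows "set (cyc_seg c a m) = {z \<in> set c. cd c (c ! (a mod length c)) z < m}"
proof -
  let ?u = "c ! (a mod length c)"
  have u: "?u \<in> set c" and e: "\<And>i. (a + i) mod length c = (pos c ?u + i) mod length c"
    using seg_start[OF assms(1,2)] by auto
  show ?thesis
  proof
    show "set (cyc_seg c a m) \<subseteq> {z \<in> set c. cd c ?u z < m}"
    proof
      fix z assume "z \<in> set (cyc_seg c a m)"
      then obtain i where i: "i < m" "z = c ! ((a + i) mod length c)"
        by (auto simp: in_set_conv_nth cyc_seg_nth)
      then have "cd c ?u z = i" using cd_nth[OF assms(1) u, of i] e assms(3) by simp
      then show "z \<in> {z \<in> set c. cd c ?u z < m}" using i assms(2) by simp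
    qed
  next
    show "{z \<in> set c. cd c ?u z < m} \<subseteq> set (cyc_seg c a m)"
    proof
      fix z assume z: "z \<in> {z \<in> set c. cd c ?u z < m}"
      then have "cyc_seg c a m ! (cd c ?u z) = z"
        using cyc_seg_nth[of "cd c ?u z" m c a] e cd_inv[OF assms(1) u, of z] by simp
      then show "z \<in> set (cyc_seg c a m)" using z by (metis (no_types, lifting) cyc_seg_len mem_Collect_eq nth_mem)
    qed
  qed
qed

lemma seg_distinct: assumes "distinct c" "m \<le> length c" shows "distinct (cyc_seg c a m)"
proof (cases "c = []")
  case True then show ?thesis using assms by (simp add: cyc_seg_def)
next
  case False
  let ?u = "c ! (a mod length c)"
  have u: "?u \<in> set c" and e: "\<And>i. (a + i) mod length c = (pos c ?u + i) mod length c"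
    using seg_start[OF assms(1) False] by auto
  show ?thesis unfolding distinct_conv_nth
  proof (intro allI impI)
    fix i j assume ij: "i < length (cyc_seg c a m)" "j < length (cyc_seg c a m)" "i \<noteq> j"
    show "cyc_seg c a m ! i \<noteq> cyc_seg c a m ! j"
    proof
      assume eq: "cyc_seg c a m ! i = cyc_seg c a m ! j"
      have "cd c ?u (cyc_seg c a m ! i) = i" using ij assms(2) cyc_seg_nth[of i m c a] e cd_nth[OF assms(1) u, of i] by simp
      moreover have "cd c ?u (cyc_seg c a m ! j) = j" using ij assms(2) cyc_seg_nth[of j m c a] e cd_nth[OF assms(1) u, of j] by simp
      ultimately show False using eq ij by simp
    qed
  qed
qed

lemma seg_dpath: assumes "dcycle V A c" "m \<le> length c" "m > 0" shows "dpath V A (cyc_seg c a m)"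
proof -
  have d: "distinct c" "c \<noteq> []" "set c \<subseteq> V" and ar: "\<And>i. i < length c \<Longrightarrow> (c ! i, c ! (Suc i mod length c)) \<in> A"
    using assms(1) unfolding dcycle_def by auto
  have "set (cyc_seg c a m) \<subseteq> V" using d unfolding cyc_seg_def by auto
  moreover have "\<forall>i. Suc i < length (cyc_seg c a m) \<longrightarrow> (cyc_seg c a m ! i, cyc_seg c a m ! Suc i) \<in> A"
  proof (intro allI impI)
    fix i assume i: "Suc i < length (cyc_seg c a m)"
    have "Suc ((a + i) mod length c) mod length c = (a + Suc i) mod length c"
      by (simp add: mod_Suc_eq)
    then show "(cyc_seg c a m ! i, cyc_seg c a m ! Suc i) \<in> A"
      using i cyc_seg_nth[of i m c a] cyc_seg_nth[of "Suc i" m c a] ar[of "(a+i) mod length c"] d(2) by simp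
  qed
  ultimately show ?thesis unfolding dpath_def using seg_distinct[OF d(1) assms(2)] assms(3)
    by (auto simp: cyc_seg_def)
qed

definition segp :: "'a list \<Rightarrow> 'a \<Rightarrow> 'a \<Rightarrow> 'a list" where
  "segp c u v = cyc_seg c (pos c u) (Suc (cd c u v))"

lemma segp: assumes "distinct c" "u \<in> set c" "v \<in> set c"
  shows "length (segp c u v) = Suc (cd c u v)" "set (segp c u v) = {z \<in> set c. cd c u z \<le> cd c u v}"
    "hd (segp c u v) = u" "last (segp c u v) = v" "distinct (segp c u v)"
proof -
  have n: "c \<noteq> []" using assms by auto
  have lt: "Suc (cd c u v) \<le> length c" using cd_lt[OF assms] by simp
  have pu: "c ! (pos c u mod length c) = u" using pos_in[OF assms(1,2)] by simp
  show "length (segp c u v) = Suc (cd c u v)" unfolding segp_def by simp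
  show "set (segp c u v) = {z \<in> set c. cd c u z \<le> cd c u v}"
    unfolding segp_def seg_set[OF assms(1) n lt] pu by auto
  show "hd (segp c u v) = u" unfolding segp_def using pu cyc_seg_nth[of 0 "Suc (cd c u v)" c "pos c u"]
    by (subst hd_conv_nth) (auto simp: cyc_seg_def)
  show "last (segp c u v) = v" unfolding segp_def
    using cyc_seg_nth[of "cd c u v" "Suc (cd c u v)" c "pos c u"] cd_inv[OF assms]
    by (subst last_conv_nth) (auto simp: cyc_seg_def)
  show "distinct (segp c u v)" unfolding segp_def by (rule seg_distinct[OF assms(1) lt])
qed

lemma segp_dpath: assumes "dcycle V A c" "u \<in> set c" "v \<in> set c" shows "dpath V A (segp c u v)"
proof -
  have "distinct c" using assms(1) unfolding dcycle_def by auto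
  then show ?thesis unfolding segp_def using seg_dpath[OF assms(1)] cd_lt[OF _ assms(2,3)] by simp
qed

lemma interval: assumes "distinct C" "cyc_subpath C P" "length P < length C"
  shows "\<forall>i < length P. P ! i = C ! ((pos C (hd P) + i) mod length C)"
    "\<forall>i < length P. cd C (hd P) (P ! i) = i"
    "\<forall>z. z \<in> set P \<longleftrightarrow> z \<in> set C \<and> cd C (hd P) z < length P"
    "\<forall>z. z \<in> set P \<longleftrightarrow> z \<in> set C \<and> cd C z (last P) < length P"
    "\<forall>z \<in> set P. cd C (hd P) z + cd C z (last P) = length P - 1"
    "hd P \<in> set C" "last P \<in> set C" "distinct P" "P \<noteq> []"
proof -
  obtain a where Pa: "P = cyc_seg C a (length P)" and ne: "P \<noteq> []" using assms(2) unfolding cyc_subpath_def by auto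
  let ?L = "length P"
  have Cn: "C \<noteq> []" using assms(3) by auto
  have h: "hd P = C ! (a mod length C)" using ne Pa cyc_seg_nth[of 0 ?L C a]
    by (metis hd_conv_nth length_greater_0_conv add_0_right)
  have u: "hd P \<in> set C" and e: "\<And>i. (a + i) mod length C = (pos C (hd P) + i) mod length C"
    using seg_start[OF assms(1) Cn, of a] h by auto
  show nth: "\<forall>i < ?L. P ! i = C ! ((pos C (hd P) + i) mod length C)"
    using Pa cyc_seg_nth[of _ ?L C a] e by (metis)
  show I0: "\<forall>i < ?L. cd C (hd P) (P ! i) = i"
    using nth cd_nth[OF assms(1) u] assms(3) by simp
  show I1: "\<forall>z. z \<in> set P \<longleftrightarrow> z \<in> set C \<and> cd C (hd P) z < ?L"
    using seg_set[OF assms(1) Cn, of ?L a] Pa h assms(3) by auto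
  show "hd P \<in> set C" by (rule u)
  have lP: "last P = P ! (?L - 1)" using ne by (simp add: last_conv_nth)
  have lin: "last P \<in> set P" using ne by simp
  then have l: "last P \<in> set C" using I1 by blast
  show "last P \<in> set C" by (rule l)
  have cdl: "cd C (hd P) (last P) = ?L - 1" using I0 lP ne by simp
  show I3: "\<forall>z \<in> set P. cd C (hd P) z + cd C z (last P) = ?L - 1"
  proof
    fix z assume z: "z \<in> set P"
    then have zc: "z \<in> set C" "cd C (hd P) z < ?L" using I1 by auto
    have "cd C z (last P) < length C" using cd_lt[OF assms(1) zc(1) l] .
    then show "cd C (hd P) z + cd C z (last P) = ?L - 1"
      using cd_tri[OF assms(1) u zc(1) l] cdl zc(2) by linarith
  qed
  show "\<forall>z. z \<in> set P \<longleftrightarrow> z \<in> set C \<and> cd C z (last P) < ?L"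
  proof (intro allI iffI)
    fix z assume "z \<in> set P" then show "z \<in> set C \<and> cd C z (last P) < ?L" using I1 I3 ne by fastforce
  next
    fix z assume z: "z \<in> set C \<and> cd C z (last P) < ?L"
    have "cd C (hd P) z < length C" using cd_lt[OF assms(1) u] z by blast
    then have "cd C (hd P) z < ?L" using cd_tri[OF assms(1) u _ l, of z] z cdl by linarith
    then show "z \<in> set P" using I1 z by blast
  qed
  show "distinct P" using Pa seg_distinct[OF assms(1)] assms(3) by (metis less_imp_le)
  show "P \<noteq> []" by (rule ne)
qed

lemma subpath_unique: assumes "distinct C" "cyc_subpath C P" "cyc_subpath C P'" "set P = set P'" "2 * length P < length C"
  shows "P = P'"
proof -
  have l1: "length P < length C" using assms(5) by simp
  note I = interval[OF assms(1,2) l1]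
  obtain a where a: "P' = cyc_seg C a (length P')" "length P' \<le> length C" using assms(3) unfolding cyc_subpath_def by blast
  have dP': "distinct P'" using seg_distinct[OF assms(1) a(2), of a] a(1) by simp
  have "length P = length P'" using distinct_card[OF I(8)] distinct_card[OF dP'] assms(4) by simp
  then have l2: "length P' < length C" using l1 by simp
  note I' = interval[OF assms(1,3) l2]
  have h1: "hd P' \<in> set P" using hd_in_set[OF I'(9)] assms(4) by simp
  have h2: "hd P \<in> set P'" using hd_in_set[OF I(9)] assms(4) by simp
  have "hd P = hd P'"
  proof (rule ccontr)
    assume ne: "hd P \<noteq> hd P'"
    have "cd C (hd P) (hd P') < length P" using I(3) h1 by blast
    moreover have "cd C (hd P') (hd P) < length P'" using I'(3) h2 by blast
    ultimately show False using cd_sum[OF assms(1) I(6) I'(6) ne] assms(5) \<open>length P = length P'\<close> by linarith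
  qed
  then show ?thesis using I(1) I'(1) \<open>length P = length P'\<close> by (intro nth_equalityI) auto
qed

lemma common_path: assumes "k_suitable V A k \<C>" "Ci \<in> \<C>" "Cj \<in> \<C>" "Ci \<noteq> Cj" "set Ci \<inter> set Cj \<noteq> {}"
  shows "cyc_subpath Ci (common_path Ci Cj)" "cyc_subpath Cj (common_path Ci Cj)"
    "length (common_path Ci Cj) \<le> k" "set (common_path Ci Cj) = set Ci \<inter> set Cj"
proof -
  obtain P where P: "cyc_subpath Ci P" "cyc_subpath Cj P" "length P \<le> k" "set P = set Ci \<inter> set Cj"
    using assms unfolding k_suitable_def by blast
  have dc: "dcycle V A Ci" "length Ci \<ge> 8 * k" using assms unfolding k_suitable_def by auto
  have "P \<noteq> []" using P(1) unfolding cyc_subpath_def by auto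
  then have "length P > 0" by simp
  then have lt: "2 * length P < length Ci" using P(3) dc(2) by linarith
  have di: "distinct Ci" using dc unfolding dcycle_def by auto
  have "common_path Ci Cj = P" unfolding common_path_def
  proof (rule the_equality)
    show "cyc_subpath Ci P \<and> cyc_subpath Cj P \<and> set P = set Ci \<inter> set Cj" using P by simp
  next
    fix P' assume "cyc_subpath Ci P' \<and> cyc_subpath Cj P' \<and> set P' = set Ci \<inter> set Cj"
    then show "P' = P" using subpath_unique[OF di P(1), of P'] lt P(4) by simp
  qed
  then show "cyc_subpath Ci (common_path Ci Cj)" "cyc_subpath Cj (common_path Ci Cj)"
    "length (common_path Ci Cj) \<le> k" "set (common_path Ci Cj) = set Ci \<inter> set Cj" using P by auto
qed

lemma qminus_set: assumes "distinct C" "s \<in> set C" "m < length C" "0 < m"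
  shows "set (cyc_seg C (pos C s + length C - m) m) = {z \<in> set C. 1 \<le> cd C z s \<and> cd C z s \<le> m}"
proof -
  let ?n = "length C"
  let ?v = "C ! ((pos C s + ?n - m) mod ?n)"
  have Cn: "C \<noteq> []" using assms by auto
  have e: "pos C s + ?n - m = pos C s + (?n - m)" using assms(3) by simp
  have v: "?v \<in> set C" using Cn by simp
  have c1: "cd C s ?v = ?n - m" unfolding e using cd_nth[OF assms(1,2), of "?n - m"] assms(3,4) by simp
  then have vs: "?v \<noteq> s" using cd_self[OF assms(1,2)] assms(3) by auto
  have c2: "cd C ?v s = m" using cd_sum[OF assms(1,2) v vs[symmetric]] c1 assms(3) by simp
  have "set (cyc_seg C (pos C s + ?n - m) m) = {z \<in> set C. cd C ?v z < m}"
    using seg_set[OF assms(1) Cn, of m] assms(3) by simp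
  also have "\<dots> = {z \<in> set C. 1 \<le> cd C z s \<and> cd C z s \<le> m}"
  proof (intro Collect_cong conj_cong refl)
    fix z assume z: "z \<in> set C"
    have t: "cd C ?v s = cd C ?v z + cd C z s \<or> cd C ?v s + ?n = cd C ?v z + cd C z s"
      using cd_tri[OF assms(1) v z assms(2)] .
    have l: "cd C ?v z < ?n" "cd C z s < ?n" using cd_lt[OF assms(1) v z] cd_lt[OF assms(1) z assms(2)] by auto
    show "cd C ?v z < m \<longleftrightarrow> 1 \<le> cd C z s \<and> cd C z s \<le> m"
      using t l c2 assms(3) by linarith
  qed
  finally show ?thesis .
qed

lemma qplus_set: assumes "distinct C" "t \<in> set C" "m < length C" "0 < m"
  shows "set (cyc_seg C (Suc (pos C t)) m) = {z \<in> set C. 1 \<le> cd C t z \<and> cd C t z \<le> m}"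
proof -
  let ?n = "length C"
  let ?v = "C ! (Suc (pos C t) mod ?n)"
  have Cn: "C \<noteq> []" using assms by auto
  have v: "?v \<in> set C" using Cn by simp
  have c1: "cd C t ?v = 1" using cd_nth[OF assms(1,2), of 1] assms(3,4) by simp
  have "set (cyc_seg C (Suc (pos C t)) m) = {z \<in> set C. cd C ?v z < m}"
    using seg_set[OF assms(1) Cn, of m] assms(3) by simp
  also have "\<dots> = {z \<in> set C. 1 \<le> cd C t z \<and> cd C t z \<le> m}"
  proof (intro Collect_cong conj_cong refl)
    fix z assume z: "z \<in> set C"
    have t: "cd C t z = cd C t ?v + cd C ?v z \<or> cd C t z + ?n = cd C t ?v + cd C ?v z"
      using cd_tri[OF assms(1,2) v z] .
    have l: "cd C ?v z < ?n" "cd C t z < ?n" using cd_lt[OF assms(1) v z] cd_lt[OF assms(1,2) z] by auto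
    show "cd C ?v z < m \<longleftrightarrow> 1 \<le> cd C t z \<and> cd C t z \<le> m"
      using t l c1 assms(3) by linarith
  qed
  finally show ?thesis .
qed

lemma mkB: assumes "dcycle V A Cl" "u \<in> set Cl" "w \<in> set Cl" "u \<noteq> w" "cd Cl w u \<ge> k"
  "dpath V A P1" "hd P1 = u" "last P1 = w" "length P1 - 1 \<ge> k" "set P1 \<inter> set Cl \<subseteq> {u, w}"
  "v \<in> set P1" "v \<notin> set Cl"
  shows "has_B_subdivision V A k 1 k"
proof -
  have d: "distinct Cl" using assms(1) unfolding dcycle_def by auto
  let ?P2 = "segp Cl u w" and ?P3 = "segp Cl w u"
  note S2 = segp[OF d assms(2,3)] and S3 = segp[OF d assms(3,2)]
  have dp: "dpath V A ?P2" "dpath V A ?P3" using segp_dpath[OF assms(1)] assms(2,3) by auto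
  have p1: "distinct P1" "P1 \<noteq> []" using assms(6) unfolding dpath_def by simp_all
  have i1: "interior P1 = set P1 - {u, w}" using interior_eq[OF p1] assms(7,8) by simp
  have ne2: "?P2 \<noteq> []" "?P3 \<noteq> []" using S2(1) S3(1) by (metis Zero_not_Suc list.size(3))+
  have i2: "interior ?P2 = set ?P2 - {u, w}" using interior_eq[OF S2(5) ne2(1)] S2(3,4) by simp
  have i3: "interior ?P3 = set ?P3 - {u, w}" using interior_eq[OF S3(5) ne2(2)] S3(3,4) by auto
  have l2: "length ?P2 - 1 \<ge> 1" using S2(1) cd_0_iff[OF d assms(2,3)] assms(4) by simp
  have l3: "length ?P3 - 1 \<ge> k" using S3(1) assms(5) by simp
  have ne: "P1 \<noteq> ?P2"
  proof
    assume "P1 = ?P2" then have "v \<in> set Cl" using assms(11) S2(2) by simp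
    then show False using assms(12) by simp
  qed
  have d12: "interior P1 \<inter> interior ?P2 = {}" "interior P1 \<inter> interior ?P3 = {}"
    using i1 i2 i3 S2(2) S3(2) assms(10) by auto
  have d23: "interior ?P2 \<inter> interior ?P3 = {}"
  proof (rule ccontr)
    assume "interior ?P2 \<inter> interior ?P3 \<noteq> {}"
    then obtain z where z: "z \<in> set Cl" "cd Cl u z \<le> cd Cl u w" "cd Cl w z \<le> cd Cl w u" "z \<noteq> u" "z \<noteq> w"
      using i2 i3 S2(2) S3(2) by auto
    have "cd Cl u z = cd Cl u w + cd Cl w z \<or> cd Cl u z + length Cl = cd Cl u w + cd Cl w z"
      using cd_tri[OF d assms(2,3) z(1)] .
    moreover have "cd Cl u w + cd Cl w u = length Cl" using cd_sum[OF d assms(2,3,4)] .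
    moreover have "cd Cl w z \<noteq> 0" "cd Cl u z \<noteq> 0" using cd_0_iff[OF d assms(3) z(1)] cd_0_iff[OF d assms(2) z(1)] z by auto
    ultimately show False using z by linarith
  qed
  show ?thesis unfolding has_B_subdivision_def
    apply (rule exI[of _ u], rule exI[of _ w], rule exI[of _ P1], rule exI[of _ ?P2], rule exI[of _ ?P3])
    using assms(4,6,7,8,9) dp S2 S3 l2 l3 ne d12 d23 by auto
qed



lemma core_minus:
  assumes dc: "dcycle V A C1" "dcycle V A Cj" "dcycle V A Cl"
  and len: "length C1 \<ge> 8*k" "length Cj \<ge> 8*k" "length Cl \<ge> 8*k" and k: "k \<ge> 1"
  and mem: "s \<in> set C1" "s \<in> set Cj" "b \<in> set C1" "b \<in> set Cl" "t \<in> set Cj" "t \<in> set Cl"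
     "y \<in> set Cj" "y \<in> set Cl" "y \<notin> set C1"
  and L: "L1 \<le> k" "L2 \<le> k" "M \<le> k"
  and H1j: "\<forall>z \<in> set Cj. z \<in> set C1 \<longleftrightarrow> cd Cj s z < L1"
  and H1l1: "\<forall>z \<in> set C1. z \<in> set Cl \<longleftrightarrow> cd C1 b z < L2"
  and H1ll: "\<forall>z \<in> set Cl. z \<in> set C1 \<longleftrightarrow> cd Cl b z < L2"
  and Hjlj: "\<forall>z \<in> set Cj. z \<in> set Cl \<longleftrightarrow> cd Cj z t < M"
  and Hjll: "\<forall>z \<in> set Cl. z \<in> set Cj \<longleftrightarrow> cd Cl z t < M"
  and Hor: "\<forall>z \<in> set Cj. z \<in> set Cl \<longrightarrow> cd Cj z t = cd Cl z t"
  and yb: "cd Cl y b \<le> 3*k" and ys: "cd Cj y s > 3*k"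
  shows "has_B_subdivision V A k 1 k"
proof -
  have d1: "distinct C1" and dj: "distinct Cj" and dl: "distinct Cl" using dc unfolding dcycle_def by auto
  define e where "e = cd Cj y t"
  have e: "e = cd Cl y t" "e < M" using Hor Hjlj mem unfolding e_def by auto
  have bnj: "b \<notin> set Cj"
  proof
    assume bj: "b \<in> set Cj"
    have h1: "cd Cj s b < L1" using H1j bj mem by auto
    have h2: "cd Cl b t < M" "cd Cj b t = cd Cl b t" using Hjlj Hor bj mem by auto
    have t1: "cd Cl y t = cd Cl y b + cd Cl b t \<or> cd Cl y t + length Cl = cd Cl y b + cd Cl b t"
      using cd_tri[OF dl mem(8) mem(4) mem(6)] .
    have t2: "cd Cj y t = cd Cj y b + cd Cj b t \<or> cd Cj y t + length Cj = cd Cj y b + cd Cj b t"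
      using cd_tri[OF dj mem(7) bj mem(5)] .
    have l2: "cd Cj y b < length Cj" using cd_lt[OF dj mem(7) bj] .
    have ysn: "\<not> cd Cj s y < L1" using H1j mem by auto
    have t3: "cd Cj s b = cd Cj s y + cd Cj y b \<or> cd Cj s b + length Cj = cd Cj s y + cd Cj y b"
      using cd_tri[OF dj mem(2) mem(7) bj] .
    have ny: "y \<noteq> s" using mem by auto
    have t4: "cd Cj y s + cd Cj s y = length Cj" using cd_sum[OF dj mem(7) mem(2) ny] .
    show False using e e_def h1 h2 t1 t2 t3 t4 l2 ysn yb ys L len k by linarith
  qed
  have tb: "t \<noteq> b" using bnj mem by auto
  have tbd: "cd Cl t b + e = cd Cl y b"
  proof -
    have t1: "cd Cl y b = cd Cl y t + cd Cl t b \<or> cd Cl y b + length Cl = cd Cl y t + cd Cl t b"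
      using cd_tri[OF dl mem(8) mem(6) mem(4)] .
    have s1: "cd Cl t b + cd Cl b t = length Cl" using cd_sum[OF dl mem(6) mem(4) tb] .
    have "\<not> cd Cl b t < M" using Hjll mem bnj by auto
    then show ?thesis using t1 s1 e by linarith
  qed
  have s1: "cd Cl t b + cd Cl b t = length Cl" using cd_sum[OF dl mem(6) mem(4) tb] .
  have G3: "cd Cl b t \<ge> 5*k" using s1 tbd yb len by linarith
  have snl: "s \<notin> set Cl"
  proof
    assume sl: "s \<in> set Cl"
    have h1: "cd Cl b s < L2" using H1ll sl mem by auto
    have h2: "cd Cj s t < M" "cd Cj s t = cd Cl s t" using Hjlj Hor sl mem by auto
    have t1: "cd Cl b t = cd Cl b s + cd Cl s t \<or> cd Cl b t + length Cl = cd Cl b s + cd Cl s t"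
      using cd_tri[OF dl mem(4) sl mem(6)] .
    show False using h1 h2 t1 G3 L len k by linarith
  qed
  have st: "s \<noteq> t" using snl mem by auto
  have G4: "cd Cj t s \<ge> k"
  proof -
    have t1: "cd Cj y s = cd Cj y t + cd Cj t s \<or> cd Cj y s + length Cj = cd Cj y t + cd Cj t s"
      using cd_tri[OF dj mem(7) mem(5) mem(2)] .
    then show ?thesis using e e_def ys L len k by linarith
  qed
  have G5: "\<forall>z \<in> set Cj. cd Cj t z \<le> cd Cj t s \<longrightarrow> z \<in> set C1 \<longrightarrow> z = s"
  proof (intro ballI impI)
    fix z assume z: "z \<in> set Cj" "cd Cj t z \<le> cd Cj t s" "z \<in> set C1"
    have h: "cd Cj s z < L1" using H1j z by auto
    have t1: "cd Cj t z = cd Cj t s + cd Cj s z \<or> cd Cj t z + length Cj = cd Cj t s + cd Cj s z"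
      using cd_tri[OF dj mem(5) mem(2) z(1)] .
    have t2: "cd Cj s z = cd Cj s t + cd Cj t z \<or> cd Cj s z + length Cj = cd Cj s t + cd Cj t z"
      using cd_tri[OF dj mem(2) mem(5) z(1)] .
    have s2: "cd Cj s t + cd Cj t s = length Cj" using cd_sum[OF dj mem(2) mem(5) st] .
    have z0: "cd Cj s z = 0 \<longleftrightarrow> s = z" using cd_0_iff[OF dj mem(2) z(1)] .
    have tc: "cd Cj s t < L1 \<Longrightarrow> t \<in> set C1" using H1j mem by auto
    have tc2: "t \<in> set C1 \<Longrightarrow> cd Cl b t < L2" using H1ll mem by auto
    show "z = s"
    proof (rule ccontr)
      assume "z \<noteq> s" then have nz: "cd Cj s z \<noteq> 0" using z0 by auto
      have "cd Cj s t < L1" using t1 t2 s2 nz h z by linarith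
      then show False using tc tc2 G3 L by linarith
    qed
  qed
  have G6: "\<forall>z \<in> set Cj. cd Cj t z \<le> cd Cj t s \<longrightarrow> z \<in> set Cl \<longrightarrow> z = t"
  proof (intro ballI impI)
    fix z assume z: "z \<in> set Cj" "cd Cj t z \<le> cd Cj t s" "z \<in> set Cl"
    show "z = t"
    proof (rule ccontr)
      assume zt: "z \<noteq> t"
      have h: "cd Cj z t < M" using Hjlj z by auto
      have s2: "cd Cj s t + cd Cj t s = length Cj" using cd_sum[OF dj mem(2) mem(5) st] .
      have s3: "cd Cj z t + cd Cj t z = length Cj" using cd_sum[OF dj z(1) mem(5) zt] .
      have "cd Cj s t < M" using s2 s3 h z(2) by linarith
      then show False using Hjlj mem snl by auto
    qed
  qed
  have sb: "s \<noteq> b" using snl mem by auto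
  have G7: "\<forall>z \<in> set C1. cd C1 s z \<le> cd C1 s b \<longrightarrow> z \<in> set Cl \<longrightarrow> z = b"
  proof (intro ballI impI)
    fix z assume z: "z \<in> set C1" "cd C1 s z \<le> cd C1 s b" "z \<in> set Cl"
    have h: "cd C1 b z < L2" using H1l1 z by auto
    have t1: "cd C1 s z = cd C1 s b + cd C1 b z \<or> cd C1 s z + length C1 = cd C1 s b + cd C1 b z"
      using cd_tri[OF d1 mem(1) mem(3) z(1)] .
    have t2: "cd C1 b z = cd C1 b s + cd C1 s z \<or> cd C1 b z + length C1 = cd C1 b s + cd C1 s z"
      using cd_tri[OF d1 mem(3) mem(1) z(1)] .
    have s2: "cd C1 s b + cd C1 b s = length C1" using cd_sum[OF d1 mem(1) mem(3) sb] .
    have z0: "cd C1 b z = 0 \<longleftrightarrow> b = z" using cd_0_iff[OF d1 mem(3) z(1)] .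
    have sc: "cd C1 b s < L2 \<Longrightarrow> s \<in> set Cl" using H1l1 mem by auto
    show "z = b"
    proof (rule ccontr)
      assume "z \<noteq> b" then have nz: "cd C1 b z \<noteq> 0" using z0 by auto
      have "cd C1 b s < L2" using t1 t2 s2 nz h z by linarith
      then show False using sc snl by blast
    qed
  qed
  let ?Q1 = "segp Cj t s" and ?Q2 = "segp C1 s b"
  note S1 = segp[OF dj mem(5) mem(2)] and S2 = segp[OF d1 mem(1) mem(3)]
  have int: "set ?Q1 \<inter> set ?Q2 = {hd ?Q2}"
  proof
    show "set ?Q1 \<inter> set ?Q2 \<subseteq> {hd ?Q2}" using G5 S1(2) S2(2,3) by auto
    show "{hd ?Q2} \<subseteq> set ?Q1 \<inter> set ?Q2" using S1(2) S2(2,3) mem cd_self[OF d1 mem(1)] by auto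
  qed
  note C = dpath_concat[OF segp_dpath[OF dc(2) mem(5) mem(2)] segp_dpath[OF dc(1) mem(1) mem(3)] _ int]
  have lh: "last ?Q1 = hd ?Q2" using S1 S2 by simp
  show ?thesis
  proof (rule mkB[OF dc(3) mem(6) mem(4) tb _ C(1)[OF lh]])
    show "k \<le> cd Cl b t" using G3 by simp
    show "hd (?Q1 @ tl ?Q2) = t" using C(2)[OF lh] S1 by simp
    show "last (?Q1 @ tl ?Q2) = b" using C(3)[OF lh] S2 by simp
    show "k \<le> length (?Q1 @ tl ?Q2) - 1" using C(5)[OF lh] S1(1) S2(1) G4 by simp
    show "set (?Q1 @ tl ?Q2) \<inter> set Cl \<subseteq> {t, b}" using C(4)[OF lh] S1(2) S2(2) G6 G7 by auto
    show "s \<in> set (?Q1 @ tl ?Q2)" using C(4)[OF lh] S2(2) mem cd_self[OF d1 mem(1)] by auto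
    show "s \<notin> set Cl" by (rule snl)
  qed
qed

lemma core_plus:
  assumes dc: "dcycle V A C1" "dcycle V A Cj" "dcycle V A Cl"
  and len: "length C1 \<ge> 8*k" "length Cj \<ge> 8*k" "length Cl \<ge> 8*k" and k: "k \<ge> 1"
  and mem: "a \<in> set C1" "a \<in> set Cj" "a' \<in> set C1" "a' \<in> set Cl" "r \<in> set Cj" "r \<in> set Cl"
     "y \<in> set Cj" "y \<in> set Cl" "y \<notin> set C1"
  and L: "L1 \<le> k" "L2 \<le> k" "M \<le> k"
  and H1j: "\<forall>z \<in> set Cj. z \<in> set C1 \<longleftrightarrow> cd Cj z a < L1"
  and H1l1: "\<forall>z \<in> set C1. z \<in> set Cl \<longleftrightarrow> cd C1 z a' < L2"
  and H1ll: "\<forall>z \<in> set Cl. z \<in> set C1 \<longleftrightarrow> cd Cl z a' < L2"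
  and Hjlj: "\<forall>z \<in> set Cj. z \<in> set Cl \<longleftrightarrow> cd Cj r z < M"
  and Hjll: "\<forall>z \<in> set Cl. z \<in> set Cj \<longleftrightarrow> cd Cl r z < M"
  and Hor: "\<forall>z \<in> set Cj. z \<in> set Cl \<longrightarrow> cd Cj r z = cd Cl r z"
  and ya: "cd Cl a' y \<le> 3*k" and ys: "cd Cj a y > 3*k"
  shows "has_B_subdivision V A k 1 k"
proof -
  have d1: "distinct C1" and dj: "distinct Cj" and dl: "distinct Cl" using dc unfolding dcycle_def by auto
  define e where "e = cd Cj r y"
  have e: "e = cd Cl r y" "e < M" using Hor Hjlj mem unfolding e_def by auto
  have bnj: "a' \<notin> set Cj"
  proof
    assume bj: "a' \<in> set Cj"
    have h1: "cd Cj a' a < L1" using H1j bj mem by auto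
    have h2: "cd Cl r a' < M" "cd Cj r a' = cd Cl r a'" using Hjlj Hor bj mem by auto
    have t1: "cd Cl r y = cd Cl r a' + cd Cl a' y \<or> cd Cl r y + length Cl = cd Cl r a' + cd Cl a' y"
      using cd_tri[OF dl mem(6) mem(4) mem(8)] .
    have t2: "cd Cj r y = cd Cj r a' + cd Cj a' y \<or> cd Cj r y + length Cj = cd Cj r a' + cd Cj a' y"
      using cd_tri[OF dj mem(5) bj mem(7)] .
    have l2: "cd Cj a' y < length Cj" using cd_lt[OF dj bj mem(7)] .
    have ysn: "\<not> cd Cj y a < L1" using H1j mem by auto
    have t3: "cd Cj a' a = cd Cj a' y + cd Cj y a \<or> cd Cj a' a + length Cj = cd Cj a' y + cd Cj y a"
      using cd_tri[OF dj bj mem(7) mem(2)] .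
    have ny: "y \<noteq> a" using mem by auto
    have t4: "cd Cj a y + cd Cj y a = length Cj" using cd_sum[OF dj mem(2) mem(7) ny[symmetric]] .
    show False using e e_def h1 h2 t1 t2 t3 t4 l2 ysn ya ys L len k by linarith
  qed
  have tb: "r \<noteq> a'" using bnj mem by auto
  have tbd: "cd Cl a' r + e = cd Cl a' y"
  proof -
    have t1: "cd Cl a' y = cd Cl a' r + cd Cl r y \<or> cd Cl a' y + length Cl = cd Cl a' r + cd Cl r y"
      using cd_tri[OF dl mem(4) mem(6) mem(8)] .
    have s1: "cd Cl a' r + cd Cl r a' = length Cl" using cd_sum[OF dl mem(4) mem(6) tb[symmetric]] .
    have "\<not> cd Cl r a' < M" using Hjll mem bnj by auto
    then show ?thesis using t1 s1 e by linarith
  qed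
  have s1: "cd Cl a' r + cd Cl r a' = length Cl" using cd_sum[OF dl mem(4) mem(6) tb[symmetric]] .
  have G3: "cd Cl r a' \<ge> 5*k" using s1 tbd ya len by linarith
  have snl: "a \<notin> set Cl"
  proof
    assume sl: "a \<in> set Cl"
    have h1: "cd Cl a a' < L2" using H1ll sl mem by auto
    have h2: "cd Cj r a < M" "cd Cj r a = cd Cl r a" using Hjlj Hor sl mem by auto
    have t1: "cd Cl r a' = cd Cl r a + cd Cl a a' \<or> cd Cl r a' + length Cl = cd Cl r a + cd Cl a a'"
      using cd_tri[OF dl mem(6) sl mem(4)] .
    show False using h1 h2 t1 G3 L len k by linarith
  qed
  have st: "a \<noteq> r" using snl mem by auto
  have G4: "cd Cj a r \<ge> k"
  proof -
    have t1: "cd Cj a y = cd Cj a r + cd Cj r y \<or> cd Cj a y + length Cj = cd Cj a r + cd Cj r y"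
      using cd_tri[OF dj mem(2) mem(5) mem(7)] .
    then show ?thesis using e e_def ys L len k by linarith
  qed
  have sra: "cd Cj a r + cd Cj r a = length Cj" using cd_sum[OF dj mem(2) mem(5) st] .
  have G5: "\<forall>z \<in> set Cj. cd Cj a z \<le> cd Cj a r \<longrightarrow> z \<in> set C1 \<longrightarrow> z = a"
  proof (intro ballI impI)
    fix z assume z: "z \<in> set Cj" "cd Cj a z \<le> cd Cj a r" "z \<in> set C1"
    show "z = a"
    proof (rule ccontr)
      assume za: "z \<noteq> a"
      have h: "cd Cj z a < L1" using H1j z by auto
      have t1: "cd Cj a r = cd Cj a z + cd Cj z r \<or> cd Cj a r + length Cj = cd Cj a z + cd Cj z r"
        using cd_tri[OF dj mem(2) z(1) mem(5)] .
      have s2: "cd Cj a z + cd Cj z a = length Cj" using cd_sum[OF dj mem(2) z(1) za[symmetric]] .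
      have l: "cd Cj z r < length Cj" using cd_lt[OF dj z(1) mem(5)] .
      have "cd Cj r a < L1" using t1 s2 sra l h z(2) by linarith
      then have "r \<in> set C1" using H1j mem by auto
      then have "cd Cl r a' < L2" using H1ll mem by auto
      then show False using G3 L by linarith
    qed
  qed
  have G6: "\<forall>z \<in> set Cj. cd Cj a z \<le> cd Cj a r \<longrightarrow> z \<in> set Cl \<longrightarrow> z = r"
  proof (intro ballI impI)
    fix z assume z: "z \<in> set Cj" "cd Cj a z \<le> cd Cj a r" "z \<in> set Cl"
    show "z = r"
    proof (rule ccontr)
      assume zt: "z \<noteq> r"
      have h: "cd Cj r z < M" using Hjlj z by auto
      have t1: "cd Cj a r = cd Cj a z + cd Cj z r \<or> cd Cj a r + length Cj = cd Cj a z + cd Cj z r"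
        using cd_tri[OF dj mem(2) z(1) mem(5)] .
      have s3: "cd Cj z r + cd Cj r z = length Cj" using cd_sum[OF dj z(1) mem(5) zt] .
      have l: "cd Cj z r < length Cj" using cd_lt[OF dj z(1) mem(5)] .
      have "cd Cj r a < M" using t1 s3 sra l h z(2) by linarith
      then show False using Hjlj mem snl by auto
    qed
  qed
  have G7: "\<forall>z \<in> set C1. cd C1 a' z \<le> cd C1 a' a \<longrightarrow> z \<in> set Cl \<longrightarrow> z = a'"
  proof (intro ballI impI)
    fix z assume z: "z \<in> set C1" "cd C1 a' z \<le> cd C1 a' a" "z \<in> set Cl"
    show "z = a'"
    proof (rule ccontr)
      assume zb: "z \<noteq> a'"
      have h: "cd C1 z a' < L2" using H1l1 z by auto
      have t1: "cd C1 a' a = cd C1 a' z + cd C1 z a \<or> cd C1 a' a + length C1 = cd C1 a' z + cd C1 z a"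
        using cd_tri[OF d1 mem(3) z(1) mem(1)] .
      have s2: "cd C1 a' z + cd C1 z a' = length C1" using cd_sum[OF d1 mem(3) z(1) zb[symmetric]] .
      have aa: "a \<noteq> a'" using snl mem by auto
      have s3: "cd C1 a' a + cd C1 a a' = length C1" using cd_sum[OF d1 mem(3) mem(1) aa[symmetric]] .
      have l: "cd C1 z a < length C1" using cd_lt[OF d1 z(1) mem(1)] .
      have "cd C1 a a' < L2" using t1 s2 s3 l h z(2) by linarith
      then show False using H1l1 mem snl by auto
    qed
  qed
  let ?Q1 = "segp C1 a' a" and ?Q2 = "segp Cj a r"
  note S1 = segp[OF d1 mem(3) mem(1)] and S2 = segp[OF dj mem(2) mem(5)]
  have int: "set ?Q1 \<inter> set ?Q2 = {hd ?Q2}"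
  proof
    show "set ?Q1 \<inter> set ?Q2 \<subseteq> {hd ?Q2}" using G5 S1(2) S2(2,3) by auto
    show "{hd ?Q2} \<subseteq> set ?Q1 \<inter> set ?Q2" using S1(2) S2(2,3) mem cd_self[OF dj mem(2)] by auto
  qed
  note C = dpath_concat[OF segp_dpath[OF dc(1) mem(3) mem(1)] segp_dpath[OF dc(2) mem(2) mem(5)] _ int]
  have lh: "last ?Q1 = hd ?Q2" using S1 S2 by simp
  show ?thesis
  proof (rule mkB[OF dc(3) mem(4) mem(6) tb[symmetric] _ C(1)[OF lh]])
    show "k \<le> cd Cl r a'" using G3 by simp
    show "hd (?Q1 @ tl ?Q2) = a'" using C(2)[OF lh] S1 by simp
    show "last (?Q1 @ tl ?Q2) = r" using C(3)[OF lh] S2 by simp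
    show "k \<le> length (?Q1 @ tl ?Q2) - 1" using C(5)[OF lh] S1(1) S2(1) G4 by simp
    show "set (?Q1 @ tl ?Q2) \<inter> set Cl \<subseteq> {a', r}" using C(4)[OF lh] S1(2) S2(2) G6 G7 by auto
    show "a \<in> set (?Q1 @ tl ?Q2)" using C(4)[OF lh] S2(2) mem cd_self[OF dj mem(2)] by auto
    show "a \<notin> set Cl" by (rule snl)
  qed
qed



lemma pair_facts:
  assumes ks: "k_suitable V A k \<C>" and in1: "Ci \<in> \<C>" "Cj \<in> \<C>" and ne: "Ci \<noteq> Cj" and it: "set Ci \<inter> set Cj \<noteq> {}"
  shows "length (common_path Ci Cj) \<le> k"
  "hd (common_path Ci Cj) \<in> set Ci" "hd (common_path Ci Cj) \<in> set Cj" "last (common_path Ci Cj) \<in> set Ci" "last (common_path Ci Cj) \<in> set Cj"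
  "\<forall>z \<in> set Ci. z \<in> set Cj \<longleftrightarrow> cd Ci (hd (common_path Ci Cj)) z < length (common_path Ci Cj)"
  "\<forall>z \<in> set Cj. z \<in> set Ci \<longleftrightarrow> cd Cj (hd (common_path Ci Cj)) z < length (common_path Ci Cj)"
  "\<forall>z \<in> set Ci. z \<in> set Cj \<longleftrightarrow> cd Ci z (last (common_path Ci Cj)) < length (common_path Ci Cj)"
  "\<forall>z \<in> set Cj. z \<in> set Ci \<longleftrightarrow> cd Cj z (last (common_path Ci Cj)) < length (common_path Ci Cj)"
  "\<forall>z \<in> set Ci. z \<in> set Cj \<longrightarrow> cd Ci (hd (common_path Ci Cj)) z = cd Cj (hd (common_path Ci Cj)) z"
  "\<forall>z \<in> set Ci. z \<in> set Cj \<longrightarrow> cd Ci z (last (common_path Ci Cj)) = cd Cj z (last (common_path Ci Cj))"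
proof -
  let ?P = "common_path Ci Cj"
  note cp = common_path[OF ks in1 ne it]
  have dc: "dcycle V A Ci" "length Ci \<ge> 8 * k" "dcycle V A Cj" "length Cj \<ge> 8 * k"
    using ks in1 unfolding k_suitable_def by auto
  have di: "distinct Ci" "distinct Cj" using dc unfolding dcycle_def by auto
  have ne: "?P \<noteq> []" using cp(1) unfolding cyc_subpath_def by auto
  then have "length ?P \<ge> 1" by (cases ?P) auto
  then have kk: "k \<ge> 1" using cp(3) by simp
  have l1: "length ?P < length Ci" "length ?P < length Cj" using cp(3) dc kk by linarith+
  note Ii = interval[OF di(1) cp(1) l1(1)] and Ij = interval[OF di(2) cp(2) l1(2)]
  show "length ?P \<le> k" by (rule cp(3))
  show "hd ?P \<in> set Ci" "hd ?P \<in> set Cj" "last ?P \<in> set Ci" "last ?P \<in> set Cj" using Ii Ij by auto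
  show "\<forall>z \<in> set Ci. z \<in> set Cj \<longleftrightarrow> cd Ci (hd ?P) z < length ?P" using Ii(3) cp(4) by blast
  show "\<forall>z \<in> set Cj. z \<in> set Ci \<longleftrightarrow> cd Cj (hd ?P) z < length ?P" using Ij(3) cp(4) by blast
  show "\<forall>z \<in> set Ci. z \<in> set Cj \<longleftrightarrow> cd Ci z (last ?P) < length ?P" using Ii(4) cp(4) by blast
  show "\<forall>z \<in> set Cj. z \<in> set Ci \<longleftrightarrow> cd Cj z (last ?P) < length ?P" using Ij(4) cp(4) by blast
  have eqh: "\<forall>z \<in> set Ci. z \<in> set Cj \<longrightarrow> cd Ci (hd ?P) z = cd Cj (hd ?P) z"
  proof (intro ballI impI)
    fix z assume "z \<in> set Ci" "z \<in> set Cj"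
    then have "z \<in> set ?P" using cp(4) by auto
    then obtain i where i: "i < length ?P" "z = ?P ! i" by (auto simp: in_set_conv_nth)
    then show "cd Ci (hd ?P) z = cd Cj (hd ?P) z" using Ii(2) Ij(2) by simp
  qed
  then show "\<forall>z \<in> set Ci. z \<in> set Cj \<longrightarrow> cd Ci (hd ?P) z = cd Cj (hd ?P) z" .
  show "\<forall>z \<in> set Ci. z \<in> set Cj \<longrightarrow> cd Ci z (last ?P) = cd Cj z (last ?P)"
  proof (intro ballI impI)
    fix z assume z: "z \<in> set Ci" "z \<in> set Cj"
    then have "z \<in> set ?P" using cp(4) by auto
    then have "cd Ci (hd ?P) z + cd Ci z (last ?P) = length ?P - 1"
      "cd Cj (hd ?P) z + cd Cj z (last ?P) = length ?P - 1" using Ii(5) Ij(5) by auto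
    then show "cd Ci z (last ?P) = cd Cj z (last ?P)" using eqh z by simp
  qed
qed

lemma meets_D: "Cj \<in> meets \<C> C1 \<Longrightarrow> Cj \<in> \<C> \<and> C1 \<noteq> Cj \<and> set C1 \<inter> set Cj \<noteq> {}"
  unfolding meets_def by auto

lemma Q_sets: assumes ks: "k_suitable V A k \<C>" and c1: "C1 \<in> \<C>" and mj: "Cj \<in> meets \<C> C1" and k: "k \<ge> 1"
  shows "set (Qminus k C1 Cj) = {z \<in> set Cj. 1 \<le> cd Cj z (hd (common_path C1 Cj)) \<and> cd Cj z (hd (common_path C1 Cj)) \<le> 3*k}"
    "set (Qplus k C1 Cj) = {z \<in> set Cj. 1 \<le> cd Cj (last (common_path C1 Cj)) z \<and> cd Cj (last (common_path C1 Cj)) z \<le> 3*k}"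
proof -
  note m = meets_D[OF mj]
  note pf = pair_facts[OF ks c1 conjunct1[OF m] conjunct1[OF conjunct2[OF m]] conjunct2[OF conjunct2[OF m]]]
  have dc: "dcycle V A Cj" "length Cj \<ge> 8 * k" using ks m unfolding k_suitable_def by auto
  have di: "distinct Cj" using dc unfolding dcycle_def by auto
  have lt: "3 * k < length Cj" "0 < 3 * k" using dc k by linarith+
  show "set (Qminus k C1 Cj) = {z \<in> set Cj. 1 \<le> cd Cj z (hd (common_path C1 Cj)) \<and> cd Cj z (hd (common_path C1 Cj)) \<le> 3*k}"
    unfolding Qminus_def using qminus_set[OF di pf(3) lt] .
  show "set (Qplus k C1 Cj) = {z \<in> set Cj. 1 \<le> cd Cj (last (common_path C1 Cj)) z \<and> cd Cj (last (common_path C1 Cj)) z \<le> 3*k}"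
    unfolding Qplus_def using qplus_set[OF di pf(5) lt] .
qed

lemma QX: assumes ks: "k_suitable V A k \<C>" and c1: "C1 \<in> \<C>" and mj: "Cj \<in> meets \<C> C1" and k: "k \<ge> 1"
  shows "set (Qplus k C1 Cj) \<inter> set (Qminus k C1 Cj) = {}"
proof (rule ccontr)
  assume "set (Qplus k C1 Cj) \<inter> set (Qminus k C1 Cj) \<noteq> {}"
  then obtain z where z: "z \<in> set Cj" "1 \<le> cd Cj (last (common_path C1 Cj)) z" "cd Cj (last (common_path C1 Cj)) z \<le> 3*k"
     "1 \<le> cd Cj z (hd (common_path C1 Cj))" "cd Cj z (hd (common_path C1 Cj)) \<le> 3*k"
    unfolding Q_sets[OF assms] by auto
  note m = meets_D[OF mj]
  note pf = pair_facts[OF ks c1 conjunct1[OF m] conjunct1[OF conjunct2[OF m]] conjunct2[OF conjunct2[OF m]]]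
  have dc: "dcycle V A Cj" "length Cj \<ge> 8 * k" using ks m unfolding k_suitable_def by auto
  have di: "distinct Cj" using dc unfolding dcycle_def by auto
  let ?s = "hd (common_path C1 Cj)" and ?t = "last (common_path C1 Cj)"
  have st: "cd Cj ?s ?t < k" using pf(7) pf(4) pf(5) pf(1) by auto
  have t1: "cd Cj z ?t = cd Cj z ?s + cd Cj ?s ?t \<or> cd Cj z ?t + length Cj = cd Cj z ?s + cd Cj ?s ?t"
    using cd_tri[OF di z(1) pf(3) pf(5)] .
  have zt: "z \<noteq> ?t" using z(2) cd_self[OF di pf(5)] by auto
  have "cd Cj z ?t + cd Cj ?t z = length Cj" using cd_sum[OF di z(1) pf(5) zt] .
  then show False using t1 st z dc by linarith
qed

lemma QM: assumes ks: "k_suitable V A k \<C>" and c1: "C1 \<in> \<C>" and mj: "Cj \<in> meets \<C> C1" and ml: "Cl \<in> meets \<C> C1"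
  and k: "k \<ge> 1" and jl: "Cj \<noteq> Cl" and noB: "\<not> has_B_subdivision V A k 1 k"
  and y: "y \<in> set (Qminus k C1 Cl)" "y \<in> set Cj"
  shows "y \<in> set (Qminus k C1 Cj)"
proof (rule ccontr)
  assume yn: "y \<notin> set (Qminus k C1 Cj)"
  note mj' = meets_D[OF mj] and ml' = meets_D[OF ml]
  note pfj = pair_facts[OF ks c1 conjunct1[OF mj'] conjunct1[OF conjunct2[OF mj']] conjunct2[OF conjunct2[OF mj']]]
  note pfl = pair_facts[OF ks c1 conjunct1[OF ml'] conjunct1[OF conjunct2[OF ml']] conjunct2[OF conjunct2[OF ml']]]
  have yl: "y \<in> set Cl" "1 \<le> cd Cl y (hd (common_path C1 Cl))" "cd Cl y (hd (common_path C1 Cl)) \<le> 3*k"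
    using y(1) unfolding Q_sets[OF ks c1 ml k] by auto
  have ij: "set Cj \<inter> set Cl \<noteq> {}" using y(2) yl(1) by auto
  note pjl = pair_facts[OF ks conjunct1[OF mj'] conjunct1[OF ml'] jl ij]
  have dc: "dcycle V A C1" "length C1 \<ge> 8 * k" "dcycle V A Cj" "length Cj \<ge> 8 * k" "dcycle V A Cl" "length Cl \<ge> 8 * k"
    using ks c1 mj' ml' unfolding k_suitable_def by auto
  have d: "distinct Cj" "distinct Cl" using dc unfolding dcycle_def by auto
  let ?s = "hd (common_path C1 Cj)" and ?b = "hd (common_path C1 Cl)"
  have yn1: "y \<notin> set C1"
  proof
    assume "y \<in> set C1"
    then have h: "cd Cl ?b y < length (common_path C1 Cl)" using pfl(7) yl(1) by auto
    have yb: "y \<noteq> ?b" using yl(2) cd_self[OF d(2) pfl(3)] by auto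
    have "cd Cl y ?b + cd Cl ?b y = length Cl" using cd_sum[OF d(2) yl(1) pfl(3) yb] .
    then show False using h pfl(1) yl dc by linarith
  qed
  have ys: "cd Cj y ?s > 3 * k"
  proof -
    have "y \<noteq> ?s" using yn1 pfj(2) by auto
    then have "cd Cj y ?s \<noteq> 0" using cd_0_iff[OF d(1) y(2) pfj(3)] by simp
    moreover have "\<not> (1 \<le> cd Cj y ?s \<and> cd Cj y ?s \<le> 3*k)" using yn y(2) unfolding Q_sets[OF ks c1 mj k] by auto
    ultimately show ?thesis by linarith
  qed
  have "has_B_subdivision V A k 1 k"
    by (rule core_minus[OF dc(1) dc(3) dc(5) dc(2) dc(4) dc(6) k pfj(2) pfj(3) pfl(2) pfl(3) pjl(4) pjl(5)
       y(2) yl(1) yn1 pfj(1) pfl(1) pjl(1) pfj(7) pfl(6) pfl(7) pjl(8) pjl(9) pjl(11) yl(3) ys])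
  then show False using noB by simp
qed

lemma QP: assumes ks: "k_suitable V A k \<C>" and c1: "C1 \<in> \<C>" and mj: "Cj \<in> meets \<C> C1" and ml: "Cl \<in> meets \<C> C1"
  and k: "k \<ge> 1" and jl: "Cj \<noteq> Cl" and noB: "\<not> has_B_subdivision V A k 1 k"
  and y: "y \<in> set (Qplus k C1 Cl)" "y \<in> set Cj"
  shows "y \<in> set (Qplus k C1 Cj)"
proof (rule ccontr)
  assume yn: "y \<notin> set (Qplus k C1 Cj)"
  note mj' = meets_D[OF mj] and ml' = meets_D[OF ml]
  note pfj = pair_facts[OF ks c1 conjunct1[OF mj'] conjunct1[OF conjunct2[OF mj']] conjunct2[OF conjunct2[OF mj']]]
  note pfl = pair_facts[OF ks c1 conjunct1[OF ml'] conjunct1[OF conjunct2[OF ml']] conjunct2[OF conjunct2[OF ml']]]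
  have yl: "y \<in> set Cl" "1 \<le> cd Cl (last (common_path C1 Cl)) y" "cd Cl (last (common_path C1 Cl)) y \<le> 3*k"
    using y(1) unfolding Q_sets[OF ks c1 ml k] by auto
  have ij: "set Cj \<inter> set Cl \<noteq> {}" using y(2) yl(1) by auto
  note pjl = pair_facts[OF ks conjunct1[OF mj'] conjunct1[OF ml'] jl ij]
  have dc: "dcycle V A C1" "length C1 \<ge> 8 * k" "dcycle V A Cj" "length Cj \<ge> 8 * k" "dcycle V A Cl" "length Cl \<ge> 8 * k"
    using ks c1 mj' ml' unfolding k_suitable_def by auto
  have d: "distinct Cj" "distinct Cl" using dc unfolding dcycle_def by auto
  let ?a = "last (common_path C1 Cj)" and ?a' = "last (common_path C1 Cl)"
  have yn1: "y \<notin> set C1"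
  proof
    assume "y \<in> set C1"
    then have h: "cd Cl y ?a' < length (common_path C1 Cl)" using pfl(9) yl(1) by auto
    have yb: "?a' \<noteq> y" using yl(2) cd_self[OF d(2) pfl(5)] by auto
    have "cd Cl ?a' y + cd Cl y ?a' = length Cl" using cd_sum[OF d(2) pfl(5) yl(1) yb] .
    then show False using h pfl(1) yl dc by linarith
  qed
  have ys: "cd Cj ?a y > 3 * k"
  proof -
    have "?a \<noteq> y" using yn1 pfj(4) by auto
    then have "cd Cj ?a y \<noteq> 0" using cd_0_iff[OF d(1) pfj(5) y(2)] by simp
    moreover have "\<not> (1 \<le> cd Cj ?a y \<and> cd Cj ?a y \<le> 3*k)" using yn y(2) unfolding Q_sets[OF ks c1 mj k] by auto
    ultimately show ?thesis by linarith
  qed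
  have "has_B_subdivision V A k 1 k"
    by (rule core_plus[OF dc(1) dc(3) dc(5) dc(2) dc(4) dc(6) k pfj(4) pfj(5) pfl(4) pfl(5) pjl(2) pjl(3)
       y(2) yl(1) yn1 pfj(1) pfl(1) pjl(1) pfj(9) pfl(8) pfl(9) pjl(6) pjl(7) pjl(10) yl(3) ys])
  then show False using noB by simp
qed

theorem mainTheorem13:
  fixes V :: "'a set" and A :: "('a \<times> 'a) set" and k :: nat
    and \<C> :: "'a list set" and C1 :: "'a list"
  assumes "digraph V A"
    and "k \<ge> 1"
    and "\<not> has_B_subdivision V A k 1 k"
    and "k_suitable V A k \<C>"
    and "C1 \<in> \<C>"
  shows "Iplus_verts k \<C> C1 \<inter> Iminus_verts k \<C> C1 = {} \<and>
         (\<forall>Cj \<in> meets \<C> C1.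
             Iminus_verts k \<C> C1 \<inter> set Cj = set (Qminus k C1 Cj) \<and>
             Iplus_verts k \<C> C1 \<inter> set Cj = set (Qplus k C1 Cj))"
proof (intro conjI ballI)
  note ks = assms(4) and c1 = assms(5) and k = assms(2) and noB = assms(3)
  have subm: "\<And>Cj. Cj \<in> meets \<C> C1 \<Longrightarrow> set (Qminus k C1 Cj) \<subseteq> set Cj"
    using Q_sets[OF ks c1 _ k] by auto
  have subp: "\<And>Cj. Cj \<in> meets \<C> C1 \<Longrightarrow> set (Qplus k C1 Cj) \<subseteq> set Cj"
    using Q_sets[OF ks c1 _ k] by auto
  show "Iplus_verts k \<C> C1 \<inter> Iminus_verts k \<C> C1 = {}"
  proof (rule ccontr)
    assume "Iplus_verts k \<C> C1 \<inter> Iminus_verts k \<C> C1 \<noteq> {}"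
    then obtain x Cj Cl where x: "Cj \<in> meets \<C> C1" "Cl \<in> meets \<C> C1" "x \<in> set (Qplus k C1 Cj)" "x \<in> set (Qminus k C1 Cl)"
      unfolding Iplus_verts_def Iminus_verts_def by blast
    have "x \<in> set (Qminus k C1 Cj)"
    proof (cases "Cj = Cl")
      case True then show ?thesis using x by simp
    next
      case False
      show ?thesis using QM[OF ks c1 x(1) x(2) k False noB x(4)] subp[OF x(1)] x(3) by blast
    qed
    then show False using QX[OF ks c1 x(1) k] x(3) by blast
  qed
next
  fix Cj assume mj: "Cj \<in> meets \<C> C1"
  note ks = assms(4) and c1 = assms(5) and k = assms(2) and noB = assms(3)
  have subm: "\<And>Cj. Cj \<in> meets \<C> C1 \<Longrightarrow> set (Qminus k C1 Cj) \<subseteq> set Cj"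
    using Q_sets[OF ks c1 _ k] by auto
  have subp: "\<And>Cj. Cj \<in> meets \<C> C1 \<Longrightarrow> set (Qplus k C1 Cj) \<subseteq> set Cj"
    using Q_sets[OF ks c1 _ k] by auto
  show "Iminus_verts k \<C> C1 \<inter> set Cj = set (Qminus k C1 Cj)"
  proof
    show "Iminus_verts k \<C> C1 \<inter> set Cj \<subseteq> set (Qminus k C1 Cj)"
    proof
      fix y assume "y \<in> Iminus_verts k \<C> C1 \<inter> set Cj"
      then obtain Cl where y: "Cl \<in> meets \<C> C1" "y \<in> set (Qminus k C1 Cl)" "y \<in> set Cj"
        unfolding Iminus_verts_def by blast
      show "y \<in> set (Qminus k C1 Cj)"
      proof (cases "Cj = Cl")
        case True then show ?thesis using y by simp
      next
        case False show ?thesis using QM[OF ks c1 mj y(1) k False noB y(2,3)] by simp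
      qed
    qed
    show "set (Qminus k C1 Cj) \<subseteq> Iminus_verts k \<C> C1 \<inter> set Cj"
      using subm[OF mj] mj unfolding Iminus_verts_def by blast
  qed
  show "Iplus_verts k \<C> C1 \<inter> set Cj = set (Qplus k C1 Cj)"
  proof
    show "Iplus_verts k \<C> C1 \<inter> set Cj \<subseteq> set (Qplus k C1 Cj)"
    proof
      fix y assume "y \<in> Iplus_verts k \<C> C1 \<inter> set Cj"
      then obtain Cl where y: "Cl \<in> meets \<C> C1" "y \<in> set (Qplus k C1 Cl)" "y \<in> set Cj"
        unfolding Iplus_verts_def by blast
      show "y \<in> set (Qplus k C1 Cj)"
      proof (cases "Cj = Cl")
        case True then show ?thesis using y by simp
      next
        case False show ?thesis using QP[OF ks c1 mj y(1) k False noB y(2,3)] by simp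
      qed
    qed
    show "set (Qplus k C1 Cj) \<subseteq> Iplus_verts k \<C> C1 \<inter> set Cj"
      using subp[OF mj] mj unfolding Iplus_verts_def by blast
  qed
qed


end
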